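(* Let $\mathbf p$ be a Nash-routing of a max game on a graph with $n\ge2$ nodes, with $C=C(\mathbf p)$ and $D=D(\mathbf p)$, and let $\mathbf p^*$ be an optimal routing. Let $Z$ be the set of all edges $e$ with $C_e(\mathbf p)\ge C-2\lg n$. If $C\ge D+2\lg n+2$, then there is a nonempty set of edges $X\subseteq Z$ such that $|f(X)|\le 2|X|$.
   Context: A routing game $(\mathbf N,G,\mathcal P)$: players $\{1,\dots,N\}$ ($N\ge1$), a simple graph $G=(V,E)$ with $n=|V|$ nodes (so fewer than $n^2$ edges), and for each player $i$ a nonempty finite set $\mathcal P_i$ of paths from $u_i$ to $v_i$. A routing is $\mathbf p=[p_1,\dots,p_N]$, $p_i\in\mathcal P_i$. $C_e(\mathbf p)$ = number of players whose path uses edge $e$; $C_i(\mathbf p)=\max_{e\in p_i}C_e(\mathbf p)$; $D_i(\mathbf p)=|p_i|$; $C(\mathbf p)=\max_eC_e(\mathbf p)$; $D(\mathbf p)=\max_i|p_i|$. Max game: $pc_i=\max(C_i,D_i)$, $SC=\max(C,D)$. A Nash-routing is one where no player can strictly lower $pc_i$ by unilaterally changing its path within $\mathcal P_i$; an optimal routing $\mathbf p^*=[p_1^*,\dots,p_N^*]$ minimizes $SC$. $\lg=\log_2$. $\Pi_e(\mathbf p)$ is the set of players $i$ with $e\in p_i$. $H$ is the set of edges $e$ with $C_e(\mathbf p)\ge D+2$. For $e\in H$ and $i\in\Pi_e(\mathbf p)$, $f(e,i)=\{e'\in p_i^*: C_{e'}(\mathbf p)\ge C_e(\mathbf p)-1\}$;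 $f(e)=\bigcup_{i\in\Pi_e(\mathbf p)}f(e,i)$; for $X\subseteq H$, $f(X)=\bigcup_{e\in X}f(e)$. *)

theory Defs
  imports Main "HOL-Library.Log_Nat" Complex_Main
begin

definition simple_graph :: "'v set \<Rightarrow> 'v set set \<Rightarrow> bool" where
  "simple_graph V E \<longleftrightarrow> finite V \<and> (\<forall>e\<in>E. \<exists>a b. a \<noteq> b \<and> a \<in> V \<and> b \<in> V \<and> e = {a, b})"

definition path_edges :: "'v list \<Rightarrow> 'v set set" where
  "path_edges p = {{p ! k, p ! Suc k} | k. Suc k < length p}"

definition is_path :: "'v set \<Rightarrow> 'v set set \<Rightarrow> 'v \<Rightarrow> 'v \<Rightarrow> 'v list \<Rightarrow> bool" where
  "is_path V E u v p \<longleftrightarrow> p \<noteq> [] \<and> hd p = u \<and> last p = v \<and> distinct p \<and> set p \<subseteq> V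
     \<and> path_edges p \<subseteq> E"

definition routing_game :: "'v set \<Rightarrow> 'v set set \<Rightarrow> nat \<Rightarrow> (nat \<Rightarrow> 'v) \<Rightarrow> (nat \<Rightarrow> 'v)
     \<Rightarrow> (nat \<Rightarrow> 'v list set) \<Rightarrow> bool" where
  "routing_game V E N u v P \<longleftrightarrow> simple_graph V E \<and> N \<ge> 1 \<and>
     (\<forall>i\<in>{1..N}. finite (P i) \<and> P i \<noteq> {} \<and> (\<forall>p\<in>P i. is_path V E (u i) (v i) p))"

definition routing :: "nat \<Rightarrow> (nat \<Rightarrow> 'v list set) \<Rightarrow> (nat \<Rightarrow> 'v list) \<Rightarrow> bool" where
  "routing N P r \<longleftrightarrow> (\<forall>i\<in>{1..N}. r i \<in> P i)"

definition users :: "nat \<Rightarrow> (nat \<Rightarrow> 'v list) \<Rightarrow> 'v set \<Rightarrow> nat set" where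
  "users N r e = {i \<in> {1..N}. e \<in> path_edges (r i)}"

definition edge_cong :: "nat \<Rightarrow> (nat \<Rightarrow> 'v list) \<Rightarrow> 'v set \<Rightarrow> nat" where
  "edge_cong N r e = card (users N r e)"

definition player_cong :: "nat \<Rightarrow> (nat \<Rightarrow> 'v list) \<Rightarrow> nat \<Rightarrow> nat" where
  "player_cong N r i = Max (insert 0 (edge_cong N r ` path_edges (r i)))"

definition player_len :: "(nat \<Rightarrow> 'v list) \<Rightarrow> nat \<Rightarrow> nat" where
  "player_len r i = card (path_edges (r i))"

definition player_cost :: "nat \<Rightarrow> (nat \<Rightarrow> 'v list) \<Rightarrow> nat \<Rightarrow> nat" where
  "player_cost N r i = max (player_cong N r i) (player_len r i)"

definition congestion :: "'v set set \<Rightarrow> nat \<Rightarrow> (nat \<Rightarrow> 'v list) \<Rightarrow> nat" where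
  "congestion E N r = Max (insert 0 (edge_cong N r ` E))"

definition dilation :: "nat \<Rightarrow> (nat \<Rightarrow> 'v list) \<Rightarrow> nat" where
  "dilation N r = Max (insert 0 (player_len r ` {1..N}))"

definition social_cost :: "'v set set \<Rightarrow> nat \<Rightarrow> (nat \<Rightarrow> 'v list) \<Rightarrow> nat" where
  "social_cost E N r = max (congestion E N r) (dilation N r)"

definition nash_routing :: "nat \<Rightarrow> (nat \<Rightarrow> 'v list set) \<Rightarrow> (nat \<Rightarrow> 'v list) \<Rightarrow> bool" where
  "nash_routing N P r \<longleftrightarrow> routing N P r \<and>
     (\<forall>i\<in>{1..N}. \<forall>q\<in>P i. player_cost N r i \<le> player_cost N (r(i := q)) i)"

definition optimal_routing :: "'v set set \<Rightarrow> nat \<Rightarrow> (nat \<Rightarrow> 'v list set) \<Rightarrow> (nat \<Rightarrow> 'v list) \<Rightarrow> bool" where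
  "optimal_routing E N P r \<longleftrightarrow> routing N P r \<and>
     (\<forall>r'. routing N P r' \<longrightarrow> social_cost E N r \<le> social_cost E N r')"

definition f_ei :: "nat \<Rightarrow> (nat \<Rightarrow> 'v list) \<Rightarrow> (nat \<Rightarrow> 'v list) \<Rightarrow> 'v set \<Rightarrow> nat \<Rightarrow> 'v set set" where
  "f_ei N r ropt e i = {e' \<in> path_edges (ropt i). edge_cong N r e' \<ge> edge_cong N r e - 1}"

definition f_e :: "nat \<Rightarrow> (nat \<Rightarrow> 'v list) \<Rightarrow> (nat \<Rightarrow> 'v list) \<Rightarrow> 'v set \<Rightarrow> 'v set set" where
  "f_e N r ropt e = (\<Union>i\<in>users N r e. f_ei N r ropt e i)"

definition f_set :: "nat \<Rightarrow> (nat \<Rightarrow> 'v list) \<Rightarrow> (nat \<Rightarrow> 'v list) \<Rightarrow> 'v set set \<Rightarrow> 'v set set" where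
  "f_set N r ropt X = (\<Union>e\<in>X. f_e N r ropt e)"

definition heavy :: "'v set set \<Rightarrow> nat \<Rightarrow> (nat \<Rightarrow> 'v list) \<Rightarrow> 'v set set" where
  "heavy E N r = {e \<in> E. edge_cong N r e \<ge> dilation N r + 2}"

end

theory Submission
  imports Defs
begin

lemma card_E_bound:
  assumes "simple_graph V E"
  shows "finite E \<and> card E \<le> card V ^ 2"
proof -
  have fV: "finite V" using assms unfolding simple_graph_def by auto
  have sub: "E \<subseteq> (\<lambda>(a,b). {a,b}) ` (V \<times> V)"
    using assms unfolding simple_graph_def by fastforce
  have "finite ((\<lambda>(a,b). {a,b}) ` (V \<times> V))" using fV by auto
  moreover have "card ((\<lambda>(a,b). {a,b}) ` (V \<times> V)) \<le> card (V \<times> V)"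
    by (rule card_image_le) (use fV in auto)
  ultimately show ?thesis using sub card_mono[OF _ sub] fV
    by (auto simp: card_cartesian_product power2_eq_square intro: finite_subset)
qed

theorem mainTheorem4:
  fixes V :: "'v set" and E :: "'v set set" and N :: nat
    and u v :: "nat \<Rightarrow> 'v" and P :: "nat \<Rightarrow> 'v list set"
    and r ropt :: "nat \<Rightarrow> 'v list"
  assumes game: "routing_game V E N u v P"
    and n2: "card V \<ge> 2"
    and nash: "nash_routing N P r"
    and opt: "optimal_routing E N P ropt"
    and big: "real (congestion E N r) \<ge> real (dilation N r) + 2 * log 2 (real (card V)) + 2"
  shows "\<exists>X. X \<noteq> {} \<and>
           X \<subseteq> {e \<in> E. real (edge_cong N r e) \<ge> real (congestion E N r) - 2 * log 2 (real (card V))} \<and>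
           card (f_set N r ropt X) \<le> 2 * card X"
proof (rule ccontr)
  assume neg: "\<not> ?thesis"
  define C where "C = congestion E N r"
  define L where "L = 2 * log 2 (real (card V))"
  define k where "k = nat (floor L)"
  define Z where "Z j = {e \<in> E. C \<le> edge_cong N r e + j}" for j
  have sg: "simple_graph V E" using game unfolding routing_game_def by auto
  from card_E_bound[OF sg] have finE: "finite E" and cE: "card E \<le> card V ^ 2" by auto
  have lg1: "log 2 (real (card V)) \<ge> 1" using n2 by simp
  hence L2: "L \<ge> 2" unfolding L_def by simp
  have kL: "real k \<le> L" "L < real k + 1" unfolding k_def using L2 by linarith+
  have Cpos: "C > 0" using big lg1 unfolding C_def by linarith
  have ZE: "Z j \<subseteq> E" for j unfolding Z_def by auto
  have finZ: "finite (Z j)" for j using finite_subset[OF ZE finE] .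
  have ZZ: "Z j \<subseteq> {e \<in> E. real (edge_cong N r e) \<ge> real (congestion E N r) - 2 * log 2 (real (card V))}"
    if "j \<le> k" for j
  proof
    fix e assume "e \<in> Z j"
    hence "e \<in> E" "C \<le> edge_cong N r e + j" unfolding Z_def by auto
    moreover have "real j \<le> L" using that kL by linarith
    ultimately show "e \<in> {e \<in> E. real (edge_cong N r e) \<ge> real (congestion E N r) - 2 * log 2 (real (card V))}"
      unfolding C_def L_def by simp
  qed
  have fZ: "f_set N r ropt (Z j) \<subseteq> Z (Suc j)" for j
  proof
    fix e' assume "e' \<in> f_set N r ropt (Z j)"
    then obtain e i where e: "e \<in> Z j" and i: "i \<in> users N r e"
      and e': "e' \<in> path_edges (ropt i)" "edge_cong N r e' \<ge> edge_cong N r e - 1"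
      unfolding f_set_def f_e_def f_ei_def by auto
    have iN: "i \<in> {1..N}" using i unfolding users_def by auto
    have "ropt i \<in> P i" using opt iN unfolding optimal_routing_def routing_def by auto
    hence "path_edges (ropt i) \<subseteq> E" using game iN unfolding routing_game_def is_path_def by auto
    with e' have "e' \<in> E" by auto
    moreover have "C \<le> edge_cong N r e' + Suc j" using e e'(2) unfolding Z_def by auto
    ultimately show "e' \<in> Z (Suc j)" unfolding Z_def by auto
  qed
  have grow: "card (f_set N r ropt (Z j)) > 2 * card (Z j)" if "j \<le> k" "Z j \<noteq> {}" for j
  proof (rule ccontr)
    assume "\<not> ?thesis"
    hence "card (f_set N r ropt (Z j)) \<le> 2 * card (Z j)" by simp
    with ZZ[OF that(1)] that(2) have "\<exists>X. X \<noteq> {} \<and>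
           X \<subseteq> {e \<in> E. real (edge_cong N r e) \<ge> real (congestion E N r) - 2 * log 2 (real (card V))} \<and>
           card (f_set N r ropt X) \<le> 2 * card X" by blast
    thus False using neg by blast
  qed
  have Z0: "Z 0 \<noteq> {}"
  proof -
    have "C \<in> insert 0 (edge_cong N r ` E)" unfolding C_def congestion_def
      using finE by (intro Max_in) auto
    then obtain e where "e \<in> E" "edge_cong N r e = C" using Cpos by auto
    thus ?thesis unfolding Z_def by auto
  qed
  have ind: "j \<le> Suc k \<Longrightarrow> card (Z j) \<ge> 2 ^ j" for j
  proof (induction j)
    case 0
    then show ?case using Z0 finZ[of 0] by (simp add: Suc_le_eq card_gt_0_iff)
  next
    case (Suc j)
    hence h: "card (Z j) \<ge> 2 ^ j" by simp
    hence "Z j \<noteq> {}" by (metis card.empty le_zero_eq power_not_zero zero_neq_numeral)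
    hence "card (f_set N r ropt (Z j)) > 2 * card (Z j)" using grow Suc.prems by auto
    moreover have "card (f_set N r ropt (Z j)) \<le> card (Z (Suc j))"
      using card_mono[OF finZ fZ] .
    ultimately show ?case using h by simp
  qed
  have "card E \<ge> 2 ^ Suc k" using ind[of "Suc k"] card_mono[OF finE ZE[of "Suc k"]] by simp
  hence "real (2 ^ Suc k) \<le> real (card V) ^ 2" using cE
    by (metis of_nat_le_iff of_nat_power le_trans)
  moreover have "(2::real) ^ Suc k > real (card V) ^ 2"
  proof -
    have xp: "real (card V) > 0" using n2 by simp
    have "2 powr L = (2 powr log 2 (real (card V))) powr 2" unfolding L_def
      by (simp add: powr_powr mult.commute)
    also have "\<dots> = real (card V) powr 2" using xp by simp
    also have "\<dots> = real (card V) ^ 2" using xp by (simp add: powr_realpow)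
    finally have "real (card V) ^ 2 = 2 powr L" by simp
    also have "\<dots> < 2 powr (real (Suc k))" using kL by (intro powr_less_mono) auto
    also have "\<dots> = 2 ^ Suc k" by (rule powr_realpow) simp
    finally show ?thesis .
  qed
  ultimately show False by simp
qed

end
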